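(* There is an absolute constant $C$ such that for every odd positive integer $d$, $$\sup_{t\in(0,d^{-1/2}]}\frac{|r_d(t)|}{t}\le\frac{C}{\sqrt d}.$$
   Context: The Hermite polynomials $(H_k)_{k\ge0}$ are the orthonormal polynomials for $\mathcal{N}(0,1)$ with $\deg H_k=k$ and positive leading coefficient (the probabilist's Hermite polynomials divided by $\sqrt{k!}$). The remainder $r_d(x)$ is defined by $$H_d(x)=\exp\!\left(\frac{x^2}{4}\right)\left(\frac{2}{\pi d}\right)^{1/4}\left(\sin\!\left[\frac{1-d}{2}\pi+\sqrt d\,x\right]+r_d(x)\right).$$ *)

theory Defs
  imports Complex_Main
begin

fun hermite_prob :: "nat \<Rightarrow> real \<Rightarrow> real" where
  "hermite_prob 0 x = 1"
| "hermite_prob (Suc 0) x = x"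
| "hermite_prob (Suc (Suc k)) x = x * hermite_prob (Suc k) x - real (Suc k) * hermite_prob k x"

text \<open>Orthonormal Hermite polynomials for N(0,1): H_k = He_k / sqrt(k!).\<close>
definition hermite :: "nat \<Rightarrow> real \<Rightarrow> real" where
  "hermite k x = hermite_prob k x / sqrt (fact k)"

text \<open>The remainder r_d, defined by
  H_d(x) = exp(x^2/4) (2/(pi d))^(1/4) (sin((1-d)/2 pi + sqrt d x) + r_d(x)).\<close>
definition hermite_rem :: "nat \<Rightarrow> real \<Rightarrow> real" where
  "hermite_rem d x = hermite d x / (exp (x^2 / 4) * (2 / (pi * real d)) powr (1/4))
     - sin ((1 - real d) / 2 * pi + sqrt (real d) * x)"

end

theory Submission
  imports Defs "HOL-Analysis.Gamma_Function"
begin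


lemma hp_rec: "hermite_prob (Suc k) x = x * hermite_prob k x - real k * hermite_prob (k - 1) x"
  by (cases k) auto

lemma hp_deriv: "(hermite_prob n has_real_derivative real n * hermite_prob (n - 1) x) (at x)"
proof (induction n x rule: hermite_prob.induct)
  case (1 x) then show ?case by simp
next
  case (2 x) then show ?case by simp
next
  case (3 k x)
  have "((\<lambda>x. x * hermite_prob (Suc k) x - real (Suc k) * hermite_prob k x) has_real_derivative
     (1 * hermite_prob (Suc k) x + x * (real (Suc k) * hermite_prob k x)
       - real (Suc k) * (real k * hermite_prob (k - 1) x))) (at x)"
  proof -
    have i1: "(hermite_prob (Suc k) has_real_derivative real (Suc k) * hermite_prob k x) (at x)" using 3(1) by simp
    have i2: "(hermite_prob k has_real_derivative real k * hermite_prob (k-1) x) (at x)" using 3(2) by simp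
    show ?thesis using DERIV_diff[OF DERIV_mult[OF DERIV_ident i1] DERIV_cmult[OF i2, of "real (Suc k)"]] by (simp add: algebra_simps)
  qed
  moreover have "1 * hermite_prob (Suc k) x + x * (real (Suc k) * hermite_prob k x)
       - real (Suc k) * (real k * hermite_prob (k - 1) x) = real (Suc (Suc k)) * hermite_prob (Suc (Suc k) - 1) x"
  proof -
    have r: "x * hermite_prob k x = hermite_prob (Suc k) x + real k * hermite_prob (k - 1) x"
      using hp_rec[of k x] by simp
    have "x * (real (Suc k) * hermite_prob k x) = real (Suc k) * (hermite_prob (Suc k) x + real k * hermite_prob (k - 1) x)"
      using r by (metis mult.left_commute)
    then show ?thesis by (simp add: algebra_simps)
  qed
  ultimately show ?case by simp
qed

lemma hp_ode: "real n * (real n - 1) * hermite_prob (n - 2) x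
   = x * real n * hermite_prob (n - 1) x - real n * hermite_prob n x"
proof (cases n)
  case 0 then show ?thesis by simp
next
  case (Suc k)
  then have "n - 2 = k - 1" by simp
  have e: "hermite_prob (Suc k) x = x * hermite_prob k x - real k * hermite_prob (k - 1) x"
    by (rule hp_rec)
  show ?thesis unfolding \<open>n - 2 = k - 1\<close> unfolding Suc e by (simp add: algebra_simps)
qed

lemma key:
  fixes h h1 h2 :: "real \<Rightarrow> real" and D :: real
  assumes D: "D \<ge> 1"
    and d1: "\<And>x. (h has_real_derivative h1 x) (at x)"
    and d2: "\<And>x. (h1 has_real_derivative h2 x) (at x)"
    and h0: "h 0 = 0"
    and b: "\<And>s. 0 \<le> s \<Longrightarrow> s \<le> 1 / sqrt D \<Longrightarrow> \<bar>h2 s + D * h s\<bar> \<le> (1 + \<bar>h s\<bar>) / 2"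
    and t: "0 \<le> t" "t \<le> 1 / sqrt D"
  shows "\<bar>h t\<bar> \<le> (4 * \<bar>h1 0\<bar> + 2 / sqrt D) * t"
proof -
  define T where "T = 1 / sqrt D"
  have T0: "0 < T" using D by (simp add: T_def)
  have T1: "T \<le> 1" using D by (simp add: T_def)
  have TT: "T^2 = 1 / D" using D by (simp add: T_def power_divide)
  have cont: "isCont (\<lambda>s. \<bar>h1 s\<bar>) x" for x
    using DERIV_isCont[OF d2] by (intro continuous_intros) auto
  obtain K where K: "\<And>s. 0 \<le> s \<Longrightarrow> s \<le> T \<Longrightarrow> \<bar>h1 s\<bar> \<le> K"
     and Kx: "\<exists>x. 0 \<le> x \<and> x \<le> T \<and> \<bar>h1 x\<bar> = K"
    using isCont_eq_Ub[of 0 T "\<lambda>s. \<bar>h1 s\<bar>"] T0 cont by auto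
  have K0: "K \<ge> 0" using K[of 0] T0 by auto
  have A: "\<bar>h s\<bar> \<le> K * s" if s: "0 \<le> s" "s \<le> T" for s
  proof -
    have "(\<lambda>x. K * x - h x) 0 \<le> (\<lambda>x. K * x - h x) s"
      apply (rule DERIV_nonneg_imp_nondecreasing[OF s(1)])
      subgoal for x
        apply (rule exI[of _ "K - h1 x"])
        using K[of x] s by (auto intro!: derivative_eq_intros d1)
      done
    moreover have "(\<lambda>x. K * x + h x) 0 \<le> (\<lambda>x. K * x + h x) s"
      apply (rule DERIV_nonneg_imp_nondecreasing[OF s(1)])
      subgoal for x
        apply (rule exI[of _ "K + h1 x"])
        using K[of x] s by (auto intro!: derivative_eq_intros d1)
      done
    ultimately show ?thesis using h0 by auto
  qed
  have B: "\<bar>h2 s\<bar> \<le> D * K * s + 1/2 + K * s / 2" if s: "0 \<le> s" "s \<le> T" for s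
  proof -
    have e1: "\<bar>h2 s\<bar> \<le> \<bar>h2 s + D * h s\<bar> + D * \<bar>h s\<bar>"
      using D abs_triangle_ineq[of "h2 s + D * h s" "- D * h s"] by (simp add: abs_mult)
    have e2: "\<bar>h2 s + D * h s\<bar> \<le> (1 + \<bar>h s\<bar>) / 2" using b[of s] s unfolding T_def by simp
    have "\<bar>h2 s\<bar> \<le> D * \<bar>h s\<bar> + (1 + \<bar>h s\<bar>) / 2"
      using order_trans[OF e1 add_right_mono[OF e2]] by (simp add: add.commute)
    also have "\<dots> \<le> D * (K * s) + (1 + K * s) / 2"
      using A[OF s] D by (intro add_mono mult_left_mono divide_right_mono) auto
    finally show ?thesis by (simp add: add_divide_distrib algebra_simps)
  qed
  define Bf where "Bf s = D * K * s^2 / 2 + s / 2 + K * s^2 / 4" for s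
  have C: "\<bar>h1 s - h1 0\<bar> \<le> Bf s" if s: "0 \<le> s" "s \<le> T" for s
  proof -
    have "(\<lambda>x. Bf x - h1 x) 0 \<le> (\<lambda>x. Bf x - h1 x) s"
      apply (rule DERIV_nonneg_imp_nondecreasing[OF s(1)])
      subgoal for x
        apply (rule exI[of _ "D * K * x + 1/2 + K * x / 2 - h2 x"])
        using B[of x] s unfolding Bf_def by (auto intro!: derivative_eq_intros d2)
      done
    moreover have "(\<lambda>x. Bf x + h1 x) 0 \<le> (\<lambda>x. Bf x + h1 x) s"
      apply (rule DERIV_nonneg_imp_nondecreasing[OF s(1)])
      subgoal for x
        apply (rule exI[of _ "D * K * x + 1/2 + K * x / 2 + h2 x"])
        using B[of x] s unfolding Bf_def by (auto intro!: derivative_eq_intros d2)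
      done
    ultimately show ?thesis by (auto simp: Bf_def)
  qed
  have Bb: "Bf s \<le> 3 * K / 4 + T / 2" if s: "0 \<le> s" "s \<le> T" for s
  proof -
    have s2: "s^2 \<le> 1 / D" using power_mono[OF s(2) s(1), of 2] TT by simp
    have "D * K * s^2 \<le> D * K * (1 / D)" using s2 D K0 by (intro mult_left_mono) auto
    also have "\<dots> = K" using D by simp
    finally have e1: "D * K * s^2 \<le> K" .
    have "1 / D \<le> 1" using D by simp
    then have "K * s^2 \<le> K * 1" using s2 K0 by (intro mult_left_mono) auto
    then show ?thesis using e1 s unfolding Bf_def by linarith
  qed
  obtain x where x: "0 \<le> x" "x \<le> T" "\<bar>h1 x\<bar> = K" using Kx by auto
  have "K \<le> \<bar>h1 0\<bar> + 3 * K / 4 + T / 2" using C[OF x(1,2)] Bb[OF x(1,2)] x(3) by linarith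
  then have KK: "K \<le> 4 * \<bar>h1 0\<bar> + 2 * T" by linarith
  have "\<bar>h t\<bar> \<le> K * t" using A t unfolding T_def by auto
  also have "\<dots> \<le> (4 * \<bar>h1 0\<bar> + 2 * T) * t" using KK t by (intro mult_right_mono) auto
  finally show ?thesis by (simp add: T_def)
qed



definition W :: "nat \<Rightarrow> real" where "W n = (\<Prod>k=1..n. (4*real k^2) / (4*real k^2 - 1))"

fun E :: "nat \<Rightarrow> real" where "E 0 = 1" | "E (Suc m) = (2 * real m + 1) * E m"

lemma E_pos: "E m > 0" by (induction m) auto

lemma He0: "hermite_prob (2*m) 0 = (-1)^m * E m"
proof (induction m)
  case 0 then show ?case by simp
next
  case (Suc m)
  have "2 * Suc m = Suc (Suc (2*m))" by simp
  then show ?case using Suc by (simp add: algebra_simps)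
qed

lemma W_Suc: "W (Suc n) = W n * ((4*real (Suc n)^2) / (4*real (Suc n)^2 - 1))"
  unfolding W_def by (simp add: prod.cl_ivl_Suc)

lemma alg1: "(A::real) > 0 \<Longrightarrow> B > 0 \<Longrightarrow> F > 0 \<Longrightarrow> (A^2 * e^2) / (B * A * F) = e^2 / F * (A / B)"
  by (simp add: field_simps power2_eq_square)

lemma alg2: "(A::real) > 0 \<Longrightarrow> C > 0 \<Longrightarrow> q > 0 \<Longrightarrow> w * (4 * q^2 / (A * C)) * C / (2 * q) = w * (2 * q / A)"
  by (simp add: field_simps power2_eq_square)

lemma alg3: "(A::real) > 0 \<Longrightarrow> C > 0 \<Longrightarrow> q > 0 \<Longrightarrow> w * (4 * q^2 / (A * C)) * C * (s * (A / (2 * q)))^2 = w * A * s^2"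
  by (simp add: field_simps power2_eq_square)

lemma fac_pos: "k \<ge> 1 \<Longrightarrow> 4*real k^2 - 1 > 0"
proof -
  assume "k \<ge> 1"
  then have "real k^2 \<ge> 1" using one_le_power[of "real k" 2] by simp
  then show ?thesis by linarith
qed

lemma W_pos: "W n > 0"
  unfolding W_def by (intro prod_pos) (auto intro!: divide_pos_pos fac_pos)

lemma wid: "W m * (2 * real m + 1) * (E m ^ 2 / fact (2*m))^2 = 1"
proof (induction m)
  case 0 then show ?case by (simp add: W_def)
next
  case (Suc m)
  have f: "fact (2 * Suc m) = (2 * real m + 2) * (2 * real m + 1) * (fact (2*m) :: real)"
    by (simp add: algebra_simps)
  have d: "4 * (real m + 1)^2 - 1 = (2 * real m + 1) * (2 * real m + 3)"
    by (simp add: algebra_simps power2_eq_square)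
  define e where "e = E m"
  define F where "F = (fact (2*m) :: real)"
  define s where "s = e^2 / F"
  have Fp: "F > 0" unfolding F_def by simp
  have s': "E (Suc m) ^ 2 / fact (2 * Suc m) = s * ((2 * real m + 1) / (2 * real m + 2))"
  proof -
    have p1: "2*real m+1 > 0" "2*real m + 2 > 0" by auto
    have "E (Suc m) ^ 2 = (2*real m+1)^2 * e^2" by (simp add: e_def power_mult_distrib)
    then show ?thesis unfolding f s_def F_def[symmetric] using alg1[OF p1(1) p1(2) Fp, of e]
      by (simp add: mult.assoc)
  qed
  have w': "W (Suc m) = W m * (4 * (real m + 1)^2 / ((2 * real m + 1) * (2 * real m + 3)))"
    unfolding W_Suc d[symmetric] by (simp add: add.commute)
  have "W (Suc m) * (2 * real (Suc m) + 1) * (E (Suc m) ^ 2 / fact (2 * Suc m))^2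
      = W m * (2 * real m + 1) * s^2"
  proof -
    have p: "2*real m+1 > 0" "2*real m + 3 > 0" "real m + 1 > 0" by auto
    have eqs: "2 * real (Suc m) + 1 = 2 * real m + 3" "2 * real m + 2 = 2 * (real m + 1)" by auto
    show ?thesis unfolding w' s' eqs by (rule alg3[OF p])
  qed
  then have "W (Suc m) * (2 * real (Suc m) + 1) * (E (Suc m) ^ 2 / fact (2 * Suc m))^2
      = W m * (2 * real m + 1) * (E m ^ 2 / fact (2*m))^2" unfolding s_def e_def F_def .
  then show ?case using Suc by simp
qed

lemma W_le: "W n \<le> pi / 2"
proof -
  have "incseq W"
  proof (rule incseq_SucI)
    fix n
    have "1 \<le> (4*real (Suc n)^2) / (4*real (Suc n)^2 - 1)"
      using fac_pos[of "Suc n"] by (subst le_divide_eq) auto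
    then show "W n \<le> W (Suc n)" unfolding W_Suc using W_pos[of n]
      by (metis mult.right_neutral mult_left_mono less_imp_le)
  qed
  moreover have "W \<longlonglongrightarrow> pi / 2" using wallis unfolding W_def .
  ultimately show ?thesis by (rule incseq_le)
qed

lemma W_ge: assumes "m \<ge> 1" shows "pi / 2 \<le> W m * (2 * real m + 1) / (2 * real m)"
proof -
  define V where "V n = W n * (1 + inverse (real n) / 2)" for n
  have "(\<lambda>n. 1 + inverse (real n) / 2) \<longlonglongrightarrow> 1 + 0 / 2"
    by (intro tendsto_intros lim_inverse_n) auto
  then have "(\<lambda>n. W n * (1 + inverse (real n) / 2)) \<longlonglongrightarrow> pi / 2 * 1"
    using wallis unfolding W_def by (intro tendsto_mult) auto
  then have lim: "V \<longlonglongrightarrow> pi / 2" unfolding V_def by simp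
  have Veq: "V n = W n * (2 * real n + 1) / (2 * real n)" if "n \<ge> 1" for n
    using that unfolding V_def by (simp add: field_simps)
  have "V n \<le> V m" if "n \<ge> m" for n
    using that
  proof (induction n rule: dec_induct)
    case base then show ?case by simp
  next
    case (step n)
    have n1: "n \<ge> 1" using step assms by simp
    have "V (Suc n) = W (Suc n) * (2 * real (Suc n) + 1) / (2 * real (Suc n))" by (rule Veq) simp
    also have "\<dots> = W n * ((4*(real n+1)^2) / (4*(real n+1)^2 - 1)) * (2 * real n + 3) / (2 * real n + 2)"
      unfolding W_Suc by (simp add: algebra_simps)
    also have "(4*(real n+1)^2) / (4*(real n+1)^2 - 1) = (4*(real n+1)^2) / ((2 * real n + 1) * (2 * real n + 3))"
      by (simp add: algebra_simps power2_eq_square)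
    also have "W n * \<dots> * (2 * real n + 3) / (2 * real n + 2) = W n * (2 * (real n + 1) / (2 * real n + 1))"
    proof -
      have p: "2*real n+1 > 0" "2*real n + 2 > 0" "2*real n + 3 > 0" by auto
      have "real n + 1 > 0" by simp
      from alg2[OF p(1) p(3) this, of "W n"] show ?thesis by (simp add: algebra_simps)
    qed
    also have "\<dots> \<le> W n * ((2 * real n + 1) / (2 * real n))"
      using W_pos[of n] n1 by (intro mult_left_mono) (auto simp: field_simps power2_eq_square)
    also have "\<dots> = V n" using Veq[OF n1] by simp
    finally show ?case using step by simp
  qed
  then have "pi / 2 \<le> V m" using lim by (intro LIMSEQ_le_const2) auto
  then show ?thesis using Veq[OF assms] by simp
qed



lemma He_odd0: "hermite_prob (2*m+1) 0 = 0"
proof (induction m)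
  case 0 then show ?case by simp
next
  case (Suc m)
  have "2 * Suc m + 1 = Suc (Suc (2*m+1))" by simp
  then show ?case using Suc by simp
qed

lemma abs_4th: assumes "(x::real) \<ge> 0" shows "\<bar>x - 1\<bar> \<le> \<bar>x^4 - 1\<bar>"
proof -
  have "x^4 - 1 = (x - 1) * ((x + 1) * (x^2 + 1))" by (simp add: algebra_simps power2_eq_square power4_eq_xxxx)
  then have "\<bar>x^4 - 1\<bar> = \<bar>x - 1\<bar> * ((x + 1) * (x^2 + 1))" using assms by (simp add: abs_mult)
  moreover have "(x + 1) * (x^2 + 1) \<ge> 1" using assms
    by (metis add_increasing2 le_add_same_cancel2 mult_1_left mult_mono zero_le_power2 zero_le_one add_nonneg_nonneg)
  ultimately show ?thesis by (metis abs_ge_zero mult_le_cancel_left1 mult.commute order_refl mult_left_mono mult_1_right)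
qed

lemma alg4:
  fixes D H0 H1 H2 c e x :: real
  assumes "D*((D-1)*H2) = x*D*H1 - D*H0"
  shows "c*(D*((D-1)*H2) - (1/2*H0 + x/2*(D*H1)))*e + c*(D*H1 - x/2*H0)*(e*(-(2*x)/4))
     = -(D+1/2-x^2/4)*(c*H0*e)"
  unfolding assms by (simp add: field_simps power2_eq_square)

lemma alg5: "(s::real) > 0 \<Longrightarrow> s * (2 / (s * s)) = 2 / s" by (simp add: field_simps)

theorem main:
  assumes "odd d" "0 < t" "t \<le> 1 / sqrt (real d)"
  shows "\<bar>hermite_rem d t\<bar> / t \<le> 10 / sqrt (real d)"
proof -
  obtain m where dm: "d = 2*m+1" using assms(1) oddE by blast
  define D where "D = real d"
  have D1: "D \<ge> 1" using dm D_def by simp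
  have Dm: "D = 2 * real m + 1" using dm D_def by simp
  define a where "a = (pi * D / 2) powr (1/4)"
  define N where "N = sqrt (fact d)"
  define c where "c = a / N"
  define f where "f x = c * hermite_prob d x * exp (-(x^2)/4)" for x
  define f1 where "f1 x = c * (D * hermite_prob (d-1) x - x/2 * hermite_prob d x) * exp (-(x^2)/4)" for x
  define \<theta> where "\<theta> = (1 - D) / 2 * pi"
  define g where "g x = sin (\<theta> + sqrt D * x)" for x
  define g1 where "g1 x = sqrt D * cos (\<theta> + sqrt D * x)" for x
  define h where "h x = f x - g x" for x
  define h1 where "h1 x = f1 x - g1 x" for x
  define h2 where "h2 x = - D * h x - (1/2 - x^2/4) * f x" for x
  have apos: "a > 0" unfolding a_def using D1 by simp
  have Npos: "N > 0" unfolding N_def by simp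
  have \<theta>m: "\<theta> = - (real m * pi)" unfolding \<theta>_def Dm by (simp add: field_simps)
  have qa: "(2 / (pi * D)) powr (1/4) = 1 / a"
  proof -
    have "(2 / (pi * D)) powr (1/4) * a = ((2 / (pi * D)) * (pi * D / 2)) powr (1/4)"
      unfolding a_def using D1 by (subst powr_mult) auto
    also have "\<dots> = 1" using D1 by simp
    finally show ?thesis using apos by (simp add: field_simps)
  qed
  have R: "hermite_rem d x = h x" for x
    unfolding hermite_rem_def h_def f_def g_def c_def hermite_def N_def[symmetric] D_def[symmetric] \<theta>_def[symmetric] qa
    using apos Npos by (simp add: exp_minus field_simps)
  have hd': "(hermite_prob (d-1) has_real_derivative (D - 1) * hermite_prob (d-2) x) (at x)" for x
  proof -
    have "real (d - 1) = D - 1" "d - 1 - 1 = d - 2" using dm D_def by auto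
    then show ?thesis using hp_deriv[of "d-1" x] by simp
  qed
  have hd'': "(hermite_prob (d - Suc 0) has_real_derivative (D - 1) * hermite_prob (d-2) x) (at x)" for x
    using hd'[of x] by simp
  have hd: "(hermite_prob d has_real_derivative D * hermite_prob (d-1) x) (at x)" for x
    using hp_deriv[of d x] D_def by simp
  have Df: "(f has_real_derivative f1 x) (at x)" for x
    unfolding f_def f1_def
    by (auto intro!: derivative_eq_intros hd simp: algebra_simps)
  have Df1: "(f1 has_real_derivative - (D + 1/2 - x^2/4) * f x) (at x)" for x
  proof -
    have "(f1 has_real_derivative
       c * (D * ((D - 1) * hermite_prob (d-2) x) - (1/2 * hermite_prob d x + x/2 * (D * hermite_prob (d-1) x))) * exp (-(x^2)/4)
       + c * (D * hermite_prob (d-1) x - x/2 * hermite_prob d x) * (exp (-(x^2)/4) * (- (2 * x) / 4))) (at x)"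
      unfolding f1_def
      by (auto intro!: derivative_eq_intros hd hd'' simp: field_simps)
    moreover have "D * ((D - 1) * hermite_prob (d-2) x) = x * D * hermite_prob (d-1) x - D * hermite_prob d x"
      using hp_ode[of d x] D_def by (simp add: mult.assoc)
    ultimately show ?thesis unfolding f_def using alg4 by (metis DERIV_cong)
  qed
  have Dg: "(g has_real_derivative g1 x) (at x)" for x
    unfolding g_def g1_def by (auto intro!: derivative_eq_intros simp: algebra_simps)
  have Dg1: "(g1 has_real_derivative - D * g x) (at x)" for x
  proof -
    have "sqrt D * sqrt D = D" using D1 by simp
    then show ?thesis unfolding g_def g1_def
      by (auto intro!: derivative_eq_intros simp: algebra_simps)
  qed
  have Dh: "(h has_real_derivative h1 x) (at x)" for x
    unfolding h_def[abs_def] h1_def using Df Dg by (auto intro!: derivative_eq_intros)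
  have Dh1: "(h1 has_real_derivative h2 x) (at x)" for x
    unfolding h1_def[abs_def] h2_def h_def using Df1 Dg1 
    by (auto intro!: derivative_eq_intros simp: algebra_simps)
  have h0: "h 0 = 0"
    unfolding h_def f_def g_def \<theta>m using He_odd0[of m] dm by simp
  have bnd: "\<bar>h2 s + D * h s\<bar> \<le> (1 + \<bar>h s\<bar>) / 2" if s: "0 \<le> s" "s \<le> 1 / sqrt D" for s
  proof -
    have "sqrt D \<ge> 1" using D1 by simp
    then have "1 / sqrt D \<le> 1" by simp
    then have s1: "s \<le> 1" using s by linarith
    have q0: "0 \<le> 1/2 - s^2/4" "1/2 - s^2/4 \<le> 1/2"
      using s s1 power_mono[OF s1 s(1), of 2] by auto
    have "h2 s + D * h s = - (1/2 - s^2/4) * (h s + g s)" unfolding h2_def h_def by (simp add: algebra_simps)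
    then have "\<bar>h2 s + D * h s\<bar> = (1/2 - s^2/4) * \<bar>h s + g s\<bar>" using q0 by (simp add: abs_mult)
    also have "\<dots> \<le> 1/2 * (\<bar>h s\<bar> + 1)"
    proof (rule mult_mono)
      show "\<bar>h s + g s\<bar> \<le> \<bar>h s\<bar> + 1" using abs_triangle_ineq[of "h s" "g s"] abs_sin_le_one unfolding g_def
        by (smt (verit))
    qed (use q0 in auto)
    finally show ?thesis by simp
  qed
  have h10: "\<bar>h1 0\<bar> \<le> 2 / sqrt D"
  proof -
    define F where "F = (fact (2*m) :: real)"
    define x where "x = a * E m / sqrt F"
    have Fp: "F > 0" unfolding F_def by simp
    have x0: "x \<ge> 0" unfolding x_def using apos E_pos[of m] Fp by simp
    have factd: "fact d = D * F" unfolding F_def dm Dm by simp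
    have NN: "N = sqrt D * sqrt F" unfolding N_def factd by (simp add: real_sqrt_mult)
    have sD: "sqrt D > 0" using D1 by simp
    have "h1 0 = c * D * hermite_prob (2*m) 0 - sqrt D * cos \<theta>"
      unfolding h1_def f1_def g1_def dm by simp
    also have "\<dots> = (-1)^m * sqrt D * (x - 1)"
    proof -
      have "c * D = sqrt D * (a / sqrt F)" unfolding c_def NN using sD Fp D1
        by (simp add: field_simps)
      then show ?thesis unfolding He0 \<theta>m x_def by (simp add: algebra_simps)
    qed
    finally have h1e: "\<bar>h1 0\<bar> = sqrt D * \<bar>x - 1\<bar>" using sD by (simp add: abs_mult)
    have a4: "a^4 = pi * D / 2" unfolding a_def using D1 by (simp add: powr_power)
    have x4: "x^4 = (pi / 2) / W m"
    proof -
      have wi: "W m * D * (E m ^ 2 / F)^2 = 1" using wid[of m] unfolding Dm F_def .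
      have "(sqrt F)^4 = ((sqrt F)^2)^2" by (simp flip: power_mult)
      also have "\<dots> = F^2" using Fp by simp
      finally have sF: "(sqrt F)^4 = F^2" .
      have "x^4 = (a * E m)^4 / F^2" unfolding x_def power_divide sF ..
      also have "\<dots> = a^4 * (E m ^ 2 / F)^2" by (simp add: power_mult_distrib power_divide flip: power_mult)
      finally have "x^4 = a^4 * (E m ^ 2 / F)^2" .
      also have "\<dots> = (pi / 2) * (D * (E m ^ 2 / F)^2)" unfolding a4 by simp
      also have "D * (E m ^ 2 / F)^2 = 1 / W m" using wi W_pos[of m] D1 E_pos[of m] by (simp add: field_simps)
      finally show ?thesis by simp
    qed
    have P1: "1 \<le> x^4" unfolding x4 using W_le[of m] W_pos[of m] by (simp add: field_simps)
    have P2: "x^4 - 1 \<le> 2 / D"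
    proof (cases "m = 0")
      case True
      then have "x^4 = pi / 2" unfolding x4 by (simp add: W_def)
      then show ?thesis using pi_less_4 True Dm by simp
    next
      case False
      then have m1: "m \<ge> 1" by simp
      have "x^4 \<le> (2 * real m + 1) / (2 * real m)" unfolding x4 using W_ge[OF m1] W_pos[of m]
        by (simp add: field_simps)
      also have "\<dots> = 1 + 1 / (2 * real m)" using m1 by (simp add: field_simps)
      finally have "x^4 - 1 \<le> 1 / (2 * real m)" by simp
      also have "\<dots> \<le> 2 / D" unfolding Dm using m1 by (simp add: field_simps)
      finally show ?thesis .
    qed
    have "\<bar>x - 1\<bar> \<le> 2 / D" using abs_4th[OF x0] P1 P2 by simp
    then have "\<bar>h1 0\<bar> \<le> sqrt D * (2 / D)" unfolding h1e using sD by (intro mult_left_mono) auto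
    also have "\<dots> = 2 / sqrt D" using alg5[OF sD] D1 by simp
    finally show ?thesis .
  qed
  have "\<bar>h t\<bar> \<le> (4 * \<bar>h1 0\<bar> + 2 / sqrt D) * t"
    using key[OF D1 Dh Dh1 h0 bnd] assms(2,3) unfolding D_def by auto
  also have "\<dots> \<le> (4 * (2 / sqrt D) + 2 / sqrt D) * t" using h10 assms(2) by (intro mult_right_mono) auto
  also have "\<dots> = 10 / sqrt D * t" by simp
  finally have "\<bar>hermite_rem d t\<bar> \<le> 10 / sqrt D * t" unfolding R .
  then show ?thesis unfolding D_def using assms(2) by (simp add: pos_divide_le_eq)
qed


theorem corollaryA9:
  shows "\<exists>C::real. \<forall>d::nat. odd d \<longrightarrow>
           (\<forall>t::real. 0 < t \<and> t \<le> 1 / sqrt (real d) \<longrightarrow>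
              \<bar>hermite_rem d t\<bar> / t \<le> C / sqrt (real d))"
  using main by blast

end
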